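(* With the setup of the context, let $\mu$ be a symmetric weight on $F$, and assume that $\overline G$ and $\overline H$ both satisfy the bunkbed conjecture. Then for all $x\in V(\overline G)$ and $y\in V(\overline H)$, $\mathbb P_{F,\mu}(x^-\sim_F y^+)\le \mathbb P_{F,\mu}(x^-\sim_F y^-)$.
   Context: All graphs are finite and simple. For a graph $G$, a weight is a function $\mu\colon E(G)\to[0,1]$; the associated edge-percolation probability space has sample space $\mathscr P(E(G))$, with $\mathbb P_{G,\mu}(X)=\prod_{e\in X}\mu(e)\prod_{e\notin X}(1-\mu(e))$ for $X\subseteq E(G)$ (edges independently open, edge $e$ with probability $\mu(e)$). For vertices $x,y$, $(x\sim_G y)$ is the event that $x$ and $y$ are joined by a path of open edges of $G$. The bunkbed graph $BB(G)=G\,\Box\,K_2$ has vertex set $V(G)\times\{0,1\}$, writing $x^-=(x,0)$, $x^+=(x,1)$, with edges $x^-y^-$ and $x^+y^+$ for every $xy\in E(G)$ and vertical edges $x^-x^+$ for every $x\in V(G)$. A weight $\mu$ on $BB(G)$ is symmetric if $\mu(x^-y^-)=\mu(x^+y^+)$ for every $xy\in E(G)$. A graph $G$ satisfies the bunkbed conjecture if for every symmetric weight $\mu$ on $BB(G)$ and all $x,y\in V(G)$, $\mathbb P_{BB(G),\mu}(x^-\sim y^-)\ge \mathbb P_{BB(G),\mu}(x^-\sim y^+)$. Setup: let $\overline F$ be a graph and $v\in V(\overline F)$ a cut vertex; let $V_1,\dots,V_k$ ($k\ge2$) be the vertex sets of the components of $\overline F\setminus\{v\}$, fix $I\subseteq\{1,\dots,k\}$,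 and set $\overline G=\overline F[\bigcup_{i\in I}V_i\cup\{v\}]$, $\overline H=\overline F[\bigcup_{i\notin I}V_i\cup\{v\}]$ (induced subgraphs). Let $F=BB(\overline F)$, $G=BB(\overline G)$, $H=BB(\overline H)$, regarded as subgraphs of $F$. *)

theory Defs
  imports Complex_Main
begin

definition simple_graph :: "'a set \<Rightarrow> 'a set set \<Rightarrow> bool" where
  "simple_graph V E \<longleftrightarrow> finite V \<and>
     (\<forall>e\<in>E. \<exists>x y. x \<in> V \<and> y \<in> V \<and> x \<noteq> y \<and> e = {x, y})"

definition induced_edges :: "'a set set \<Rightarrow> 'a set \<Rightarrow> 'a set set" where
  "induced_edges E S = {e \<in> E. e \<subseteq> S}"

definition joined :: "'a set set \<Rightarrow> 'a \<Rightarrow> 'a \<Rightarrow> bool" where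
  "joined X a b \<longleftrightarrow> (\<lambda>u w. {u, w} \<in> X)\<^sup>*\<^sup>* a b"

definition components :: "'a set \<Rightarrow> 'a set set \<Rightarrow> 'a set set" where
  "components V E = {{y \<in> V. joined E x y} | x. x \<in> V}"

definition cut_vertex :: "'a set \<Rightarrow> 'a set set \<Rightarrow> 'a \<Rightarrow> bool" where
  "cut_vertex V E v \<longleftrightarrow> v \<in> V \<and>
     card (components (V - {v}) (induced_edges E (V - {v}))) > card (components V E)"

text \<open>Bunkbed graph: x^- = (x,False), x^+ = (x,True).\<close>
definition bb_vertices :: "'a set \<Rightarrow> ('a \<times> bool) set" where
  "bb_vertices V = V \<times> (UNIV :: bool set)"

definition bb_edges :: "'a set \<Rightarrow> 'a set set \<Rightarrow> ('a \<times> bool) set set" where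
  "bb_edges V E =
     {{(x, b), (y, b)} | x y b. {x, y} \<in> E} \<union> {{(x, False), (x, True)} | x. x \<in> V}"

definition perc_prob :: "'b set set \<Rightarrow> ('b set \<Rightarrow> real) \<Rightarrow> ('b set set \<Rightarrow> bool) \<Rightarrow> real" where
  "perc_prob E \<mu> A =
     (\<Sum>X\<in>{X. X \<subseteq> E \<and> A X}. (\<Prod>e\<in>X. \<mu> e) * (\<Prod>e\<in>E - X. 1 - \<mu> e))"

definition weight :: "'b set set \<Rightarrow> ('b set \<Rightarrow> real) \<Rightarrow> bool" where
  "weight E \<mu> \<longleftrightarrow> (\<forall>e\<in>E. 0 \<le> \<mu> e \<and> \<mu> e \<le> 1)"

definition symmetric_weight :: "'a set set \<Rightarrow> (('a \<times> bool) set \<Rightarrow> real) \<Rightarrow> bool" where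
  "symmetric_weight E \<mu> \<longleftrightarrow>
     (\<forall>x y. {x, y} \<in> E \<longrightarrow> \<mu> {(x, False), (y, False)} = \<mu> {(x, True), (y, True)})"

definition bunkbed :: "'a set \<Rightarrow> 'a set set \<Rightarrow> bool" where
  "bunkbed V E \<longleftrightarrow>
     (\<forall>\<mu>. weight (bb_edges V E) \<mu> \<longrightarrow> symmetric_weight E \<mu> \<longrightarrow>
       (\<forall>x\<in>V. \<forall>y\<in>V.
          perc_prob (bb_edges V E) \<mu> (\<lambda>X. joined X (x, False) (y, True))
          \<le> perc_prob (bb_edges V E) \<mu> (\<lambda>X. joined X (x, False) (y, False))))"

end

theory Submission
  imports Defs
begin

definition pw :: "'b set set \<Rightarrow> ('b set \<Rightarrow> real) \<Rightarrow> 'b set set \<Rightarrow> real" where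
  "pw E \<mu> X = (\<Prod>e\<in>X. \<mu> e) * (\<Prod>e\<in>E - X. 1 - \<mu> e)"

lemma ob: "of_bool b * (r::real) = (if b then r else 0)" by simp

lemma perc_alt: "finite E \<Longrightarrow> perc_prob E \<mu> A = (\<Sum>X\<in>Pow E. of_bool (A X) * pw E \<mu> X)"
proof -
  assume f: "finite E"
  have "{X. X \<subseteq> E \<and> A X} = {X\<in>Pow E. A X}" by auto
  then show ?thesis unfolding perc_prob_def pw_def
    using sum.inter_filter[of "Pow E" "\<lambda>X. (\<Prod>e\<in>X. \<mu> e) * (\<Prod>e\<in>E - X. 1 - \<mu> e)" A] f
    by (simp add: ob)
qed

lemma perc_cong: "(\<And>X. X \<subseteq> E \<Longrightarrow> A X = B X) \<Longrightarrow> perc_prob E \<mu> A = perc_prob E \<mu> B"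
proof -
  assume h: "\<And>X. X \<subseteq> E \<Longrightarrow> A X = B X"
  have "{X. X \<subseteq> E \<and> A X} = {X. X \<subseteq> E \<and> B X}" using h by auto
  then show ?thesis unfolding perc_prob_def by simp
qed

lemma perc_mu_cong: "(\<And>e. e \<in> E \<Longrightarrow> \<mu> e = \<nu> e) \<Longrightarrow> perc_prob E \<mu> A = perc_prob E \<nu> A"
  unfolding perc_prob_def
  by (intro sum.cong refl arg_cong2[where f="(*)"] prod.cong) auto

lemma perc_false: "perc_prob E \<mu> (\<lambda>_. False) = 0"
  unfolding perc_prob_def by simp

lemma pw_union:
  assumes "X1 \<subseteq> E1" "X2 \<subseteq> E2" "E1 \<inter> E2 = {}" "finite E1" "finite E2"
  shows "pw (E1 \<union> E2) \<mu> (X1 \<union> X2) = pw E1 \<mu> X1 * pw E2 \<mu> X2"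
proof -
  have fx: "finite X1" "finite X2" using assms by (auto intro: finite_subset)
  have d: "X1 \<inter> X2 = {}" using assms by auto
  have e: "E1 \<union> E2 - (X1 \<union> X2) = (E1 - X1) \<union> (E2 - X2)" using assms by auto
  have d2: "(E1 - X1) \<inter> (E2 - X2) = {}" using assms by auto
  show ?thesis unfolding pw_def e
    using prod.union_disjoint[OF fx d, of \<mu>]
      prod.union_disjoint[of "E1 - X1" "E2 - X2" "\<lambda>e. 1 - \<mu> e"] d2 assms
    by (simp add: algebra_simps)
qed

lemma sum_pow_union:
  assumes "finite E1" "finite E2" "E1 \<inter> E2 = {}"
  shows "(\<Sum>X\<in>Pow (E1 \<union> E2). f X) = (\<Sum>X1\<in>Pow E1. \<Sum>X2\<in>Pow E2. f (X1 \<union> X2))"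
proof -
  have img: "Pow (E1 \<union> E2) = (\<lambda>(a,b). a \<union> b) ` (Pow E1 \<times> Pow E2)"
  proof
    show "Pow (E1 \<union> E2) \<subseteq> (\<lambda>(a,b). a \<union> b) ` (Pow E1 \<times> Pow E2)"
    proof
      fix X assume "X \<in> Pow (E1 \<union> E2)"
      then have "X = (\<lambda>(a,b). a \<union> b) (X \<inter> E1, X \<inter> E2)" by auto
      moreover have "(X \<inter> E1, X \<inter> E2) \<in> Pow E1 \<times> Pow E2" by auto
      ultimately show "X \<in> (\<lambda>(a,b). a \<union> b) ` (Pow E1 \<times> Pow E2)" by blast
    qed
  qed auto
  have inj: "inj_on (\<lambda>(a,b). a \<union> b) (Pow E1 \<times> Pow E2)"
  proof (rule inj_onI, clarsimp)
    fix a b a' b' assume h: "a \<subseteq> E1" "b \<subseteq> E2" "a' \<subseteq> E1" "b' \<subseteq> E2" "a \<union> b = a' \<union> b'"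
    have "a = (a \<union> b) \<inter> E1" "a' = (a' \<union> b') \<inter> E1" using h assms(3) by auto
    moreover have "b = (a \<union> b) \<inter> E2" "b' = (a' \<union> b') \<inter> E2" using h assms(3) by auto
    ultimately show "a = a' \<and> b = b'" using h(5) by metis
  qed
  show ?thesis unfolding img sum.reindex[OF inj]
    by (simp add: sum.cartesian_product split_def)
qed

lemma perc_factor:
  assumes "finite E1" "finite E2" "E1 \<inter> E2 = {}"
  shows "perc_prob (E1 \<union> E2) \<mu> A =
    (\<Sum>X1\<in>Pow E1. pw E1 \<mu> X1 * perc_prob E2 \<mu> (\<lambda>X2. A (X1 \<union> X2)))"
proof -
  have "perc_prob (E1 \<union> E2) \<mu> A = (\<Sum>X\<in>Pow (E1 \<union> E2). of_bool (A X) * pw (E1 \<union> E2) \<mu> X)"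
    using assms by (simp add: perc_alt)
  also have "\<dots> = (\<Sum>X1\<in>Pow E1. \<Sum>X2\<in>Pow E2. of_bool (A (X1 \<union> X2)) * pw (E1 \<union> E2) \<mu> (X1 \<union> X2))"
    by (rule sum_pow_union[OF assms])
  also have "\<dots> = (\<Sum>X1\<in>Pow E1. \<Sum>X2\<in>Pow E2. pw E1 \<mu> X1 * (of_bool (A (X1 \<union> X2)) * pw E2 \<mu> X2))"
    using assms by (intro sum.cong refl) (simp add: pw_union)
  also have "\<dots> = (\<Sum>X1\<in>Pow E1. pw E1 \<mu> X1 * perc_prob E2 \<mu> (\<lambda>X2. A (X1 \<union> X2)))"
    by (simp only: perc_alt[OF assms(2)] sum_distrib_left)
  finally show ?thesis .
qed

lemma perc_zero_edge:
  assumes "finite E" "e0 \<in> E" "\<mu> e0 = 0"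
  shows "perc_prob E \<mu> A = perc_prob (E - {e0}) \<mu> A"
proof -
  have E: "E = {e0} \<union> (E - {e0})" using assms by auto
  have "perc_prob E \<mu> A = (\<Sum>X1\<in>Pow {e0}. pw {e0} \<mu> X1 * perc_prob (E - {e0}) \<mu> (\<lambda>X2. A (X1 \<union> X2)))"
    by (subst E, rule perc_factor) (use assms in auto)
  also have "\<dots> = perc_prob (E - {e0}) \<mu> A"
    using assms by (simp add: Pow_insert pw_def)
  finally show ?thesis .
qed

lemma perc_reindex:
  assumes f: "finite E" and t1: "\<And>e. e \<in> E \<Longrightarrow> t e \<in> E" and t2: "\<And>e. e \<in> E \<Longrightarrow> t (t e) = e"
    and m: "\<And>e. e \<in> E \<Longrightarrow> \<mu> (t e) = \<mu> e"
  shows "perc_prob E \<mu> A = perc_prob E \<mu> (\<lambda>X. A (t ` X))"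
proof -
  have pwt: "pw E \<mu> (t ` X) = pw E \<mu> X" if X: "X \<subseteq> E" for X
  proof -
    have i1: "inj_on t X" using X t2 by (metis inj_on_inverseI subsetD)
    have i2: "inj_on t (E - X)" using t2 by (metis inj_on_inverseI DiffD1)
    have ex: "E - t ` X = t ` (E - X)"
    proof
      show "E - t ` X \<subseteq> t ` (E - X)"
      proof
        fix e assume e: "e \<in> E - t ` X"
        then have "t e \<in> E - X" using t1 t2 by (metis DiffD1 DiffD2 DiffI image_eqI)
        then show "e \<in> t ` (E - X)" using e t2 by (metis DiffD1 image_eqI)
      qed
      show "t ` (E - X) \<subseteq> E - t ` X"
        using t1 t2 X by auto (metis subsetD)
    qed
    show ?thesis unfolding pw_def ex prod.reindex[OF i1] prod.reindex[OF i2]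
      using X m by (intro arg_cong2[where f="(*)"] prod.cong) auto
  qed
  show ?thesis unfolding perc_alt[OF f]
  proof (rule sum.reindex_bij_witness[where i="image t" and j="image t"])
    fix X assume X: "X \<in> Pow E"
    then show tt: "t ` t ` X = X" using t2 by (force simp: image_image)
    show "t ` X \<in> Pow E" using X t1 by auto
    show "of_bool (A (t ` t ` X)) * pw E \<mu> (t ` X) = of_bool (A X) * pw E \<mu> X"
      using X pwt[of X] tt by simp
  next
    fix X assume X: "X \<in> Pow E"
    then show "t ` t ` X = X" using t2 by (force simp: image_image)
    show "t ` X \<in> Pow E" using X t1 by auto
  qed
qed

lemma joined_refl[simp]: "joined X a a" unfolding joined_def by simp

lemma joined_trans: "joined X a b \<Longrightarrow> joined X b c \<Longrightarrow> joined X a c"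
  unfolding joined_def by (rule rtranclp_trans)

lemma joined_edge: "{a, b} \<in> X \<Longrightarrow> joined X a b"
  unfolding joined_def by (rule r_into_rtranclp) simp

lemma joined_step: "joined X a b \<Longrightarrow> {b, c} \<in> X \<Longrightarrow> joined X a c"
  using joined_trans joined_edge by metis

lemma joined_mono: "joined X a b \<Longrightarrow> X \<subseteq> Y \<Longrightarrow> joined Y a b"
  unfolding joined_def by (erule rtranclp_mono[THEN predicate2D, rotated]) auto

lemma joined_sym: "joined X a b \<Longrightarrow> joined X b a"
  unfolding joined_def
proof (induction rule: rtranclp_induct)
  case (step y z)
  then have "{z, y} \<in> X" by (simp add: insert_commute)
  then show ?case using step by (meson converse_rtranclp_into_rtranclp)
qed simp

lemma joined_image: "joined X a b \<Longrightarrow> joined ((\<lambda>e. f ` e) ` X) (f a) (f b)"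
  unfolding joined_def
proof (induction rule: rtranclp_induct)
  case (step y z)
  have yz: "{y, z} \<in> X" using step(2) by simp
  have "{f y, f z} = (\<lambda>e. f ` e) {y, z}" by simp
  then have "{f y, f z} \<in> (\<lambda>e. f ` e) ` X" using yz by (rule image_eqI)
  with step(3) show ?case by (rule rtranclp.rtrancl_into_rtrancl)
qed simp

lemma joined_induct[consumes 1, case_names base step]:
  assumes "joined X a b" "P a" "\<And>y z. joined X a y \<Longrightarrow> {y, z} \<in> X \<Longrightarrow> P y \<Longrightarrow> P z"
  shows "P b"
  using assms(1) unfolding joined_def
proof (induction rule: rtranclp_induct)
  case base then show ?case using assms(2) by simp
next
  case (step y z) then show ?case using assms(3)[of y z] unfolding joined_def by simp
qed

lemma joined_split:
  fixes p :: "bool \<Rightarrow> 'b"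
  assumes X1: "\<And>e. e \<in> X1 \<Longrightarrow> e \<subseteq> SG" and X2: "\<And>e. e \<in> X2 \<Longrightarrow> e \<subseteq> SH"
    and inter: "\<And>z. z \<in> SG \<Longrightarrow> z \<in> SH \<Longrightarrow> \<exists>d. z = p d"
    and x0: "x0 \<in> SG"
    and j: "joined (X1 \<union> X2) x0 z" and zH: "z \<in> SH"
  shows "\<exists>b. joined X1 x0 (p b) \<and> joined X2 (p b) z"
proof -
  have conv: "\<exists>b'. joined X1 x0 (p b') \<and> joined X2 (p b') (p d)"
    if h: "joined X1 x0 (p b)" "joined X2 (p b) (p c)" "joined X1 (p c) (p d)" for b c d
  proof (cases "d = c")
    case True then show ?thesis using h(1,2) by (intro exI[of _ b]) simp
  next
    case False
    show ?thesis
    proof (cases "d = b")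
      case True then show ?thesis using h(1) by (intro exI[of _ b]) simp
    next
      case False
      then have "b = c" using \<open>d \<noteq> c\<close> by (cases b; cases c; cases d) simp_all
      then have "joined X1 x0 (p d)" using joined_trans[OF h(1)] h(3) by simp
      then show ?thesis by (intro exI[of _ d]) simp
    qed
  qed
  define IG where "IG z \<longleftrightarrow> joined X1 x0 z \<or>
      (\<exists>b c. joined X1 x0 (p b) \<and> joined X2 (p b) (p c) \<and> joined X1 (p c) z)" for z
  have gh: "\<exists>b. joined X1 x0 (p b) \<and> joined X2 (p b) (p d)" if "IG (p d)" for d
  proof -
    { assume "joined X1 x0 (p d)" then have ?thesis by (intro exI[of _ d]) simp }
    moreover
    { assume "\<exists>b c. joined X1 x0 (p b) \<and> joined X2 (p b) (p c) \<and> joined X1 (p c) (p d)"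
      then obtain b c where "joined X1 x0 (p b)" "joined X2 (p b) (p c)" "joined X1 (p c) (p d)" by blast
      then have ?thesis by (rule conv) }
    ultimately show ?thesis using that unfolding IG_def by blast
  qed
  have IGstep: "IG z" if "IG y" "joined X1 y z" for y z
  proof -
    { assume "joined X1 x0 y" then have ?thesis using that(2) unfolding IG_def by (blast intro: joined_trans) }
    moreover
    { assume "\<exists>b c. joined X1 x0 (p b) \<and> joined X2 (p b) (p c) \<and> joined X1 (p c) y"
      then obtain b c where "joined X1 x0 (p b)" "joined X2 (p b) (p c)" "joined X1 (p c) y" by blast
      then have ?thesis using that(2) unfolding IG_def by (blast intro: joined_trans) }
    ultimately show ?thesis using that unfolding IG_def by blast
  qed
  define I where "I z \<longleftrightarrow> (z \<in> SH \<and> (\<exists>b. joined X1 x0 (p b) \<and> joined X2 (p b) z))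
     \<or> (z \<in> SG \<and> IG z)" for z
  have "I z" using j
  proof (induction rule: joined_induct)
    case base then show ?case using x0 unfolding I_def IG_def by simp
  next
    case (step y z)
    show ?case
    proof (cases "{y, z} \<in> X1")
      case True
      then have yz: "y \<in> SG" "z \<in> SG" using X1 by auto
      have e: "joined X1 y z" using True by (rule joined_edge)
      from step(3) have "(y \<in> SH \<and> (\<exists>b. joined X1 x0 (p b) \<and> joined X2 (p b) y)) \<or> (y \<in> SG \<and> IG y)"
        unfolding I_def .
      then show ?thesis
      proof (elim disjE conjE)
        assume "y \<in> SH" and b: "\<exists>b. joined X1 x0 (p b) \<and> joined X2 (p b) y"
        obtain d where d: "y = p d" using inter yz \<open>y \<in> SH\<close> by blast
        then show ?thesis using b e yz unfolding I_def IG_def by blast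
      next
        assume "IG y"
        then show ?thesis using e yz IGstep unfolding I_def by blast
      qed
    next
      case False
      then have F: "{y, z} \<in> X2" using step(2) by auto
      then have yz: "y \<in> SH" "z \<in> SH" using X2 by auto
      have e: "joined X2 y z" using F by (rule joined_edge)
      from step(3) have "(y \<in> SH \<and> (\<exists>b. joined X1 x0 (p b) \<and> joined X2 (p b) y)) \<or> (y \<in> SG \<and> IG y)"
        unfolding I_def .
      then show ?thesis
      proof (elim disjE conjE)
        assume b: "\<exists>b. joined X1 x0 (p b) \<and> joined X2 (p b) y"
        then obtain b where "joined X1 x0 (p b)" "joined X2 (p b) y" by blast
        then show ?thesis using e yz unfolding I_def by (blast intro: joined_trans)
      next
        assume "y \<in> SG" "IG y"
        obtain d where d: "y = p d" using inter yz \<open>y \<in> SG\<close> by blast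
        then obtain b where "joined X1 x0 (p b)" "joined X2 (p b) y" using gh[of d] \<open>IG y\<close> by blast
        then show ?thesis using e yz unfolding I_def by (blast intro: joined_trans)
      qed
    qed
  qed
  then have "(z \<in> SH \<and> (\<exists>b. joined X1 x0 (p b) \<and> joined X2 (p b) z)) \<or> (z \<in> SG \<and> IG z)"
    unfolding I_def .
  then show ?thesis
  proof (elim disjE conjE)
    assume "z \<in> SG" "IG z"
    then obtain d where "z = p d" using inter zH by blast
    then show ?thesis using gh \<open>IG z\<close> by blast
  qed blast
qed

lemma bb_mono: "V \<subseteq> V' \<Longrightarrow> E \<subseteq> E' \<Longrightarrow> bb_edges V E \<subseteq> bb_edges V' E'"
  unfolding bb_edges_def by auto

lemma bb_mem: "e \<in> bb_edges V E \<longleftrightarrow>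
   (\<exists>a c b. {a, c} \<in> E \<and> e = {(a, b), (c, b)}) \<or> (\<exists>a\<in>V. e = {(a, False), (a, True)})"
  unfolding bb_edges_def by auto

lemma ind_mem: "e \<in> induced_edges E S \<longleftrightarrow> e \<in> E \<and> e \<subseteq> S"
  unfolding induced_edges_def by blast

definition sw :: "'a \<times> bool \<Rightarrow> 'a \<times> bool" where "sw q = (fst q, \<not> snd q)"

lemma sw_sw[simp]: "sw (sw q) = q" by (simp add: sw_def)
lemma sw_pair[simp]: "sw (a, b) = (a, \<not> b)" by (simp add: sw_def)

lemma sw_img_img[simp]: "sw ` sw ` e = e"
  by (simp add: image_image)

lemma joined_sw: "joined ((\<lambda>e. sw ` e) ` X) a c \<longleftrightarrow> joined X (sw a) (sw c)"
proof
  assume "joined ((\<lambda>e. sw ` e) ` X) a c"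
  from joined_image[OF this, of sw] show "joined X (sw a) (sw c)" by (simp add: image_image)
next
  assume "joined X (sw a) (sw c)"
  from joined_image[OF this, of sw] show "joined ((\<lambda>e. sw ` e) ` X) a c" by simp
qed

theorem lemma3p4:
  fixes VF :: "'a set" and EF :: "'a set set" and v :: 'a
    and J :: "'a set set" and \<mu> :: "('a \<times> bool) set \<Rightarrow> real" and x y :: 'a
  defines "CS \<equiv> components (VF - {v}) (induced_edges EF (VF - {v}))"
  defines "VG \<equiv> \<Union>J \<union> {v}"
  defines "VH \<equiv> \<Union>(CS - J) \<union> {v}"
  assumes F: "simple_graph VF EF"
    and cut: "cut_vertex VF EF v"
    and k2: "card CS \<ge> 2"
    and J: "J \<subseteq> CS"
    and w: "weight (bb_edges VF EF) \<mu>"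
    and sym: "symmetric_weight EF \<mu>"
    and bbG: "bunkbed VG (induced_edges EF VG)"
    and bbH: "bunkbed VH (induced_edges EF VH)"
    and x: "x \<in> VG" and y: "y \<in> VH"
  shows "perc_prob (bb_edges VF EF) \<mu> (\<lambda>X. joined X (x, False) (y, True))
         \<le> perc_prob (bb_edges VF EF) \<mu> (\<lambda>X. joined X (x, False) (y, False))"
proof -
  define W where "W = VF - {v}"
  define EW where "EW = induced_edges EF W"
  have CS': "CS = {{y \<in> W. joined EW w y} | w. w \<in> W}"
    unfolding CS_def W_def EW_def components_def ..
  have vF: "v \<in> VF" using cut unfolding cut_vertex_def by blast
  have finVF: "finite VF" using F unfolding simple_graph_def by blast
  have EFedge: "a \<in> VF \<and> c \<in> VF \<and> a \<noteq> c" if "{a, c} \<in> EF" for a c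
  proof -
    have "\<forall>e\<in>EF. \<exists>x y. x \<in> VF \<and> y \<in> VF \<and> x \<noteq> y \<and> e = {x, y}"
      using F unfolding simple_graph_def by (rule conjunct2)
    from this[rule_format, OF that] obtain p q where "p \<in> VF" "q \<in> VF" "p \<noteq> q" "{a, c} = {p, q}"
      by blast
    then show ?thesis by (auto simp: doubleton_eq_iff)
  qed
  have compsub: "C \<subseteq> W" if "C \<in> CS" for C using that unfolding CS' by auto
  have compcover: "\<exists>C\<in>CS. w \<in> C" if "w \<in> W" for w
  proof
    show "{y \<in> W. joined EW w y} \<in> CS" using that unfolding CS' by blast
    show "w \<in> {y \<in> W. joined EW w y}" using that by simp
  qed
  have compdisj: "C1 = C2" if hh: "C1 \<in> CS" "C2 \<in> CS" "z \<in> C1" "z \<in> C2" for C1 C2 z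
  proof -
    obtain w1 where w1: "w1 \<in> W" "C1 = {y \<in> W. joined EW w1 y}" using hh(1) unfolding CS' by blast
    obtain w2 where w2: "w2 \<in> W" "C2 = {y \<in> W. joined EW w2 y}" using hh(2) unfolding CS' by blast
    have j1: "joined EW w1 z" and j2: "joined EW w2 z" using hh w1 w2 by auto
    have a: "joined EW w1 w2" using joined_trans[OF j1 joined_sym[OF j2]] .
    have b: "joined EW w2 w1" using joined_trans[OF j2 joined_sym[OF j1]] .
    have "joined EW w1 y \<longleftrightarrow> joined EW w2 y" for y using joined_trans[OF a] joined_trans[OF b] by blast
    then show ?thesis unfolding w1 w2 by simp
  qed
  have compedge: "c \<in> C" if hh: "C \<in> CS" "a \<in> C" "{a, c} \<in> EF" "c \<in> W" for C a c
  proof -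
    obtain w1 where w1: "w1 \<in> W" "C = {y \<in> W. joined EW w1 y}" using hh(1) unfolding CS' by blast
    have "a \<in> W" using hh w1 by auto
    then have "{a, c} \<in> EW" using hh unfolding EW_def ind_mem by auto
    then have ac: "joined EW a c" by (rule joined_edge)
    have "joined EW w1 a" using hh(2) w1 by simp
    from joined_trans[OF this ac] have "joined EW w1 c" .
    then show ?thesis using hh(4) w1 by simp
  qed
  have vG: "v \<in> VG" and vH: "v \<in> VH" unfolding VG_def VH_def by auto
  have VGsub: "VG \<subseteq> VF" using J compsub vF unfolding VG_def W_def by blast
  have VHsub: "VH \<subseteq> VF" using compsub vF unfolding VH_def W_def by blast
  have VGH: "z = v" if hz: "z \<in> VG" "z \<in> VH" for z
  proof (rule ccontr)
    assume "z \<noteq> v"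
    then obtain C1 C2 where "C1 \<in> J" "z \<in> C1" "C2 \<in> CS - J" "z \<in> C2"
      using hz unfolding VG_def VH_def by blast
    then show False using compdisj[of C1 C2 z] J by blast
  qed
  have edgeside: "(a \<in> VG \<and> c \<in> VG) \<or> (a \<in> VH \<and> c \<in> VH)" if e: "{a, c} \<in> EF" for a c
  proof -
    have ac: "a \<in> VF" "c \<in> VF" "a \<noteq> c" using EFedge[OF e] by auto
    have cov: "z \<in> VG \<or> z \<in> VH" if "z \<in> VF" for z
    proof (cases "z = v")
      case True then show ?thesis using vG by simp
    next
      case False
      then have "z \<in> W" using that unfolding W_def by simp
      then obtain C where "C \<in> CS" "z \<in> C" using compcover by blast
      then show ?thesis unfolding VG_def VH_def by (cases "C \<in> J") auto
    qed
    show ?thesis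
    proof (cases "a = v \<or> c = v")
      case True then show ?thesis using cov ac vG vH by auto
    next
      case False
      then have W: "a \<in> W" "c \<in> W" using ac unfolding W_def by auto
      then obtain C where C: "C \<in> CS" "a \<in> C" using compcover by blast
      then have "c \<in> C" using compedge e W by blast
      then show ?thesis using C unfolding VG_def VH_def by (cases "C \<in> J") auto
    qed
  qed
  define EFb where "EFb = bb_edges VF EF"
  define EGb where "EGb = bb_edges VG (induced_edges EF VG)"
  define EHb where "EHb = bb_edges VH (induced_edges EF VH)"
  define ev where "ev = {(v, False), (v, True)}"
  define EH where "EH = EHb - {ev}"
  have indsub: "induced_edges EF S \<subseteq> EF" for S unfolding induced_edges_def by auto
  have EGsub: "EGb \<subseteq> EFb" unfolding EGb_def EFb_def by (rule bb_mono[OF VGsub indsub])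
  have EHsub: "EHb \<subseteq> EFb" unfolding EHb_def EFb_def by (rule bb_mono[OF VHsub indsub])
  have evG: "ev \<in> EGb" unfolding ev_def EGb_def bb_mem using vG by blast
  have evH: "ev \<in> EHb" unfolding ev_def EHb_def bb_mem using vH by blast
  have hne: "{(a, b), (c, b)} \<noteq> ev" for a c b unfolding ev_def by (auto simp: doubleton_eq_iff)
  have vne: "{(a, False), (a, True)} \<noteq> ev" if "a \<noteq> v" for a
    using that unfolding ev_def by (auto simp: doubleton_eq_iff)
  have finEFb: "finite EFb"
  proof -
    have "EFb \<subseteq> Pow (VF \<times> (UNIV :: bool set))"
    proof
      fix e assume "e \<in> EFb"
      then show "e \<in> Pow (VF \<times> (UNIV :: bool set))"
        unfolding EFb_def bb_mem using EFedge by auto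
    qed
    moreover have "finite (Pow (VF \<times> (UNIV :: bool set)))" using finVF by simp
    ultimately show ?thesis by (rule finite_subset)
  qed
  have finG: "finite EGb" using finEFb EGsub finite_subset by blast
  have finHb: "finite EHb" using finEFb EHsub finite_subset by blast
  have finH: "finite EH" using finHb unfolding EH_def by simp
  have Fsplit: "EFb = EGb \<union> EH"
  proof
    show "EFb \<subseteq> EGb \<union> EH"
    proof
      fix e assume "e \<in> EFb"
      then consider (h) a c b where "{a, c} \<in> EF" "e = {(a, b), (c, b)}"
        | (vt) a where "a \<in> VF" "e = {(a, False), (a, True)}"
        unfolding EFb_def bb_mem by blast
      then show "e \<in> EGb \<union> EH"
      proof cases
        case h
        then consider "a \<in> VG" "c \<in> VG" | "a \<in> VH" "c \<in> VH" using edgeside by blast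
        then show ?thesis
        proof cases
          case 1
          then have "{a, c} \<in> induced_edges EF VG" using h unfolding ind_mem by auto
          then have "e \<in> EGb" using h unfolding EGb_def bb_mem by blast
          then show ?thesis by blast
        next
          case 2
          then have "{a, c} \<in> induced_edges EF VH" using h unfolding ind_mem by auto
          then have "e \<in> EHb" using h unfolding EHb_def bb_mem by blast
          moreover have "e \<noteq> ev" using h hne by simp
          ultimately show ?thesis unfolding EH_def by blast
        qed
      next
        case vt
        show ?thesis
        proof (cases "a \<in> VG")
          case True then have "e \<in> EGb" using vt unfolding EGb_def bb_mem by blast
          then show ?thesis by blast
        next
          case False
          then have "a \<in> VH" "a \<noteq> v" using vt edgeside vG
            unfolding VG_def VH_def W_def using compcover[of a] W_def
            by (auto simp: W_def)
          then have "e \<in> EHb" using vt unfolding EHb_def bb_mem by blast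
          moreover have "e \<noteq> ev" using vt vne \<open>a \<noteq> v\<close> by simp
          ultimately show ?thesis unfolding EH_def by blast
        qed
      qed
    qed
    show "EGb \<union> EH \<subseteq> EFb" using EGsub EHsub unfolding EH_def by blast
  qed
  have EGside: "e \<subseteq> VG \<times> UNIV" if "e \<in> EGb" for e
    using that unfolding EGb_def bb_mem ind_mem by auto
  have EHbside: "e \<subseteq> VH \<times> UNIV" if "e \<in> EHb" for e
    using that unfolding EHb_def bb_mem ind_mem by auto
  have EHside: "e \<subseteq> VH \<times> UNIV" if "e \<in> EH" for e
    using that EHbside unfolding EH_def by blast
  have Fdisj: "EGb \<inter> EH = {}"
  proof (rule ccontr)
    assume "EGb \<inter> EH \<noteq> {}"
    then obtain e where e: "e \<in> EGb" "e \<in> EH" by blast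
    have ev': "fst q = v" if hq: "q \<in> e" for q
    proof -
      have "fst q \<in> VG" "fst q \<in> VH" using EGside[OF e(1)] EHside[OF e(2)] hq by (auto simp: mem_Times_iff)
      then show ?thesis by (rule VGH)
    qed
    from e(1) consider (h) a c b where "{a, c} \<in> EF" "e = {(a, b), (c, b)}"
        | (vt) a where "e = {(a, False), (a, True)}"
      unfolding EGb_def bb_mem ind_mem by blast
    then show False
    proof cases
      case h
      then have "a = v" "c = v" using ev'[of "(a, b)"] ev'[of "(c, b)"] by auto
      then show False using EFedge[OF h(1)] by simp
    next
      case vt
      then have "a = v" using ev'[of "(a, False)"] by auto
      then show False using vt e(2) unfolding EH_def ev_def by simp
    qed
  qed
  define g where "g = (\<lambda>(b::bool) X1. joined X1 (x, False) (v, b))"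
  define h where "h = (\<lambda>(b::bool) (s::bool) X2. joined X2 (v, b) (y, s))"
  have key: "joined (X1 \<union> X2) (x, False) (y, s) \<longleftrightarrow>
      (g False X1 \<and> h False s X2) \<or> (g True X1 \<and> h True s X2)"
    if X: "X1 \<subseteq> EGb" "X2 \<subseteq> EH" for X1 X2 s
  proof
    assume j: "joined (X1 \<union> X2) (x, False) (y, s)"
    have p1: "\<And>e. e \<in> X1 \<Longrightarrow> e \<subseteq> VG \<times> UNIV" using X EGside by blast
    have p2: "\<And>e. e \<in> X2 \<Longrightarrow> e \<subseteq> VH \<times> UNIV" using X EHside by blast
    have p3: "\<And>z::'a \<times> bool. z \<in> VG \<times> UNIV \<Longrightarrow> z \<in> VH \<times> UNIV \<Longrightarrow> \<exists>d. z = (v, d)"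
    proof -
      fix z :: "'a \<times> bool" assume "z \<in> VG \<times> UNIV" "z \<in> VH \<times> UNIV"
      then have "fst z = v" using VGH by (auto simp: mem_Times_iff)
      then have "z = (v, snd z)" by (cases z) simp
      then show "\<exists>d. z = (v, d)" by blast
    qed
    have p4: "(x, False) \<in> VG \<times> UNIV" using x by simp
    have p5: "(y, s) \<in> VH \<times> UNIV" using y by simp
    from joined_split[of X1 "VG \<times> UNIV" X2 "VH \<times> UNIV" "\<lambda>b. (v, b)" "(x, False)" "(y, s)", OF p1 p2 p3 p4 j p5]
    obtain b where "joined X1 (x, False) (v, b)" "joined X2 (v, b) (y, s)" by auto
    then show "(g False X1 \<and> h False s X2) \<or> (g True X1 \<and> h True s X2)"
      unfolding g_def h_def by (cases b) auto
  next
    assume "(g False X1 \<and> h False s X2) \<or> (g True X1 \<and> h True s X2)"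
    then obtain b where b1: "joined X1 (x, False) (v, b)" and b2: "joined X2 (v, b) (y, s)"
      unfolding g_def h_def by blast
    have "joined (X1 \<union> X2) (x, False) (v, b)" using joined_mono[OF b1] by blast
    moreover have "joined (X1 \<union> X2) (v, b) (y, s)" using joined_mono[OF b2] by blast
    ultimately show "joined (X1 \<union> X2) (x, False) (y, s)" by (rule joined_trans)
  qed
  define Q where "Q = (\<lambda>s \<alpha> \<beta>. perc_prob EH \<mu> (\<lambda>X2. (\<alpha> \<and> h False s X2) \<or> (\<beta> \<and> h True s X2)))"
  have Pform: "perc_prob EFb \<mu> (\<lambda>X. joined X (x, False) (y, s)) =
      (\<Sum>X1\<in>Pow EGb. pw EGb \<mu> X1 * Q s (g False X1) (g True X1))" for s
  proof -
    have "perc_prob EFb \<mu> (\<lambda>X. joined X (x, False) (y, s)) =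
      (\<Sum>X1\<in>Pow EGb. pw EGb \<mu> X1 * perc_prob EH \<mu> (\<lambda>X2. joined (X1 \<union> X2) (x, False) (y, s)))"
      unfolding Fsplit by (rule perc_factor[OF finG finH Fdisj])
    also have "\<dots> = (\<Sum>X1\<in>Pow EGb. pw EGb \<mu> X1 * Q s (g False X1) (g True X1))"
    proof (rule sum.cong[OF refl])
      fix X1 assume X1: "X1 \<in> Pow EGb"
      have "perc_prob EH \<mu> (\<lambda>X2. joined (X1 \<union> X2) (x, False) (y, s)) = Q s (g False X1) (g True X1)"
        unfolding Q_def
      proof (rule perc_cong)
        fix X2 assume "X2 \<subseteq> EH"
        then show "joined (X1 \<union> X2) (x, False) (y, s) =
          ((g False X1 \<and> h False s X2) \<or> (g True X1 \<and> h True s X2))"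
          using key[of X1 X2 s] X1 by simp
      qed
      then show "pw EGb \<mu> X1 * perc_prob EH \<mu> (\<lambda>X2. joined (X1 \<union> X2) (x, False) (y, s)) =
          pw EGb \<mu> X1 * Q s (g False X1) (g True X1)" by simp
    qed
    finally show ?thesis .
  qed
  define \<tau> where "\<tau> = (\<lambda>e::('a \<times> bool) set. sw ` e)"
  have symE: "\<mu> {(a, False), (c, False)} = \<mu> {(a, True), (c, True)}" if "{a, c} \<in> EF" for a c
    using sym that unfolding symmetric_weight_def by blast
  have t1: "\<tau> e \<in> EH \<and> \<mu> (\<tau> e) = \<mu> e" if he: "e \<in> EH" for e
  proof -
    have eH: "e \<in> EHb" "e \<noteq> ev" using he unfolding EH_def by auto
    from eH(1) consider (h) a c b where "{a, c} \<in> induced_edges EF VH" "e = {(a, b), (c, b)}"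
        | (vt) a where "a \<in> VH" "e = {(a, False), (a, True)}"
      unfolding EHb_def bb_mem by blast
    then show ?thesis
    proof cases
      case h
      have te: "\<tau> e = {(a, \<not> b), (c, \<not> b)}" unfolding \<tau>_def h by simp
      have "\<tau> e \<in> EHb" unfolding te EHb_def bb_mem using h(1) by blast
      moreover have "\<tau> e \<noteq> ev" unfolding te by (rule hne)
      moreover have "{a, c} \<in> EF" using h(1) unfolding ind_mem by blast
      then have "\<mu> (\<tau> e) = \<mu> e" unfolding te using symE[of a c] h(2) by (cases b) simp_all
      ultimately show ?thesis unfolding EH_def by blast
    next
      case vt
      have "\<tau> e = e" unfolding \<tau>_def vt by auto
      then show ?thesis using he by simp
    qed
  qed
  have t2: "\<tau> (\<tau> e) = e" for e unfolding \<tau>_def by simp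
  have reidx: "perc_prob EH \<mu> A = perc_prob EH \<mu> (\<lambda>X. A (\<tau> ` X))" for A
    by (rule perc_reindex[OF finH]) (use t1 t2 in auto)
  have ht: "h b s (\<tau> ` X) = h (\<not> b) (\<not> s) X" for b s X
    unfolding h_def \<tau>_def by (simp add: joined_sw)
  have S1: "perc_prob EH \<mu> (h True True) = perc_prob EH \<mu> (h False False)"
  proof -
    have "perc_prob EH \<mu> (h True True) = perc_prob EH \<mu> (\<lambda>X. h True True (\<tau> ` X))" by (rule reidx)
    also have "\<dots> = perc_prob EH \<mu> (h False False)" by (simp add: ht)
    finally show ?thesis .
  qed
  have S2: "perc_prob EH \<mu> (h False True) = perc_prob EH \<mu> (h True False)"
  proof -
    have "perc_prob EH \<mu> (h False True) = perc_prob EH \<mu> (\<lambda>X. h False True (\<tau> ` X))" by (rule reidx)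
    also have "\<dots> = perc_prob EH \<mu> (h True False)" by (simp add: ht)
    finally show ?thesis .
  qed
  have S3: "perc_prob EH \<mu> (\<lambda>X. h False True X \<or> h True True X) = perc_prob EH \<mu> (\<lambda>X. h False False X \<or> h True False X)"
  proof -
    have "perc_prob EH \<mu> (\<lambda>X. h False True X \<or> h True True X) =
        perc_prob EH \<mu> (\<lambda>X. h False True (\<tau> ` X) \<or> h True True (\<tau> ` X))" by (rule reidx)
    also have "\<dots> = perc_prob EH \<mu> (\<lambda>X. h True False X \<or> h False False X)" by (simp add: ht)
    also have "\<dots> = perc_prob EH \<mu> (\<lambda>X. h False False X \<or> h True False X)" by (rule perc_cong) blast
    finally show ?thesis .
  qed
  define a where "a = perc_prob EH \<mu> (h False False) - perc_prob EH \<mu> (h False True)"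
  have Qdiff: "Q True \<alpha> \<beta> - Q False \<alpha> \<beta> = a * (of_bool \<beta> - of_bool \<alpha>)" for \<alpha> \<beta>
    by (cases \<alpha>; cases \<beta>) (simp_all add: Q_def a_def perc_false S1 S2 S3)
  define PG where "PG = (\<lambda>b. perc_prob EGb \<mu> (g b))"
  have PGalt: "PG b = (\<Sum>X1\<in>Pow EGb. of_bool (g b X1) * pw EGb \<mu> X1)" for b
    unfolding PG_def by (rule perc_alt[OF finG])
  have diff: "perc_prob EFb \<mu> (\<lambda>X. joined X (x, False) (y, True)) - perc_prob EFb \<mu> (\<lambda>X. joined X (x, False) (y, False))
      = a * PG True - a * PG False"
  proof -
    have "perc_prob EFb \<mu> (\<lambda>X. joined X (x, False) (y, True)) - perc_prob EFb \<mu> (\<lambda>X. joined X (x, False) (y, False))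
      = (\<Sum>X1\<in>Pow EGb. pw EGb \<mu> X1 * (Q True (g False X1) (g True X1) - Q False (g False X1) (g True X1)))"
      unfolding Pform by (simp add: sum_subtractf right_diff_distrib)
    also have "\<dots> = (\<Sum>X1\<in>Pow EGb. a * (of_bool (g True X1) * pw EGb \<mu> X1) - a * (of_bool (g False X1) * pw EGb \<mu> X1))"
      by (rule sum.cong[OF refl]) (simp add: Qdiff algebra_simps)
    also have "\<dots> = a * PG True - a * PG False"
      by (simp add: PGalt sum_subtractf sum_distrib_left)
    finally show ?thesis .
  qed
  define \<mu>' where "\<mu>' = \<mu>(ev := 0)"
  have wF: "0 \<le> \<mu> e \<and> \<mu> e \<le> 1" if "e \<in> EFb" for e using w that unfolding weight_def EFb_def by blast
  have wH: "weight EHb \<mu>'" unfolding weight_def \<mu>'_def using wF EHsub by auto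
  have sH: "symmetric_weight (induced_edges EF VH) \<mu>'"
    unfolding symmetric_weight_def
  proof (intro allI impI)
    fix a c assume "{a, c} \<in> induced_edges EF VH"
    then have "{a, c} \<in> EF" unfolding ind_mem by blast
    then show "\<mu>' {(a, False), (c, False)} = \<mu>' {(a, True), (c, True)}"
      unfolding \<mu>'_def using hne symE by simp
  qed
  have bH: "perc_prob EHb \<mu>' (\<lambda>X. joined X (v, False) (y, True)) \<le> perc_prob EHb \<mu>' (\<lambda>X. joined X (v, False) (y, False))"
    using bbH wH sH vH y unfolding bunkbed_def EHb_def by blast
  have convH: "perc_prob EHb \<mu>' A = perc_prob EH \<mu> A" for A
  proof -
    have "perc_prob EHb \<mu>' A = perc_prob (EHb - {ev}) \<mu>' A"
      by (rule perc_zero_edge[OF finHb evH]) (simp add: \<mu>'_def)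
    also have "\<dots> = perc_prob EH \<mu> A" unfolding EH_def
      by (rule perc_mu_cong) (simp add: \<mu>'_def)
    finally show ?thesis .
  qed
  have aH: "a \<ge> 0" using bH unfolding convH a_def h_def by simp
  have wG: "weight EGb \<mu>" unfolding weight_def using wF EGsub by auto
  have sG: "symmetric_weight (induced_edges EF VG) \<mu>"
    unfolding symmetric_weight_def using symE unfolding ind_mem by blast
  have bG: "perc_prob EGb \<mu> (\<lambda>X. joined X (x, False) (v, True)) \<le> perc_prob EGb \<mu> (\<lambda>X. joined X (x, False) (v, False))"
    using bbG wG sG vG x unfolding bunkbed_def EGb_def by blast
  have PGle: "PG True \<le> PG False" using bG unfolding PG_def g_def by simp
  have "a * PG True - a * PG False \<le> 0"
    using mult_left_mono[OF PGle aH] by simp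
  then show ?thesis using diff unfolding EFb_def by simp
qed

end
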